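(* Let $(X,Y)$ be a random pair with $X\in\mathcal{X}\subset\mathbb{R}^d$ and $Y\in\{0,1\}$. Let $\hat f_0,\hat f_1$ be estimates of the class-conditional densities of $X\mid(Y=0)$ and $X\mid(Y=1)$, and let $\hat\pi_0,\hat\pi_1=1-\hat\pi_0$ be estimates of the class priors, and define $$\hat\eta(X)=\frac{\hat f_1(X)\hat\pi_1}{\hat f_0(X)\hat\pi_0+\hat f_1(X)\hat\pi_1}.$$ Let $\hat\phi_{\mathrm{NP}}(X)=\mathbb{1}(\hat\eta(X)>t_{\mathrm{NP}})$ be a level-$\alpha$ NP classifier with threshold $0\le t_{\mathrm{NP}}\le 1$. Assign the type I error cost $$c_0=c_0(t_{\mathrm{NP}},\hat\pi_0)=\frac{t_{\mathrm{NP}}\hat\pi_0}{(1-t_{\mathrm{NP}})(1-\hat\pi_0)+t_{\mathrm{NP}}\hat\pi_0},\qquad c_1=1-c_0,$$ and define the rebalanced score $$\tilde\eta(X)=\frac{\hat f_1(X)c_1}{\hat f_0(X)c_0+\hat f_1(X)c_1}.$$ Then the rebalancing cost-sensitive classifier $\hat\phi^{\mathrm r}_{\mathrm{CS}}(X)=\mathbb{1}(\tilde\eta(X)>1/2)$ coincides with $\hat\phi_{\mathrm{NP}}(X)$ for all $X$. That is, $R_0(\hat\phi^{\mathrm r}_{\mathrm{CS}})\le\alpha$ with high probability.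
   Context: For a classifier $\phi:\mathcal{X}\to\{0,1\}$, the population type I error is $R_0(\phi)=\mathbb{P}(\phi(X)=1\mid Y=0)$ and the type II error is $R_1(\phi)=\mathbb{P}(\phi(X)=0\mid Y=1)$. In the rebalancing cost-sensitive approach, the misclassification costs $c_0$ (of type I error) and $c_1$ (of type II error), normalized so that $c_0+c_1=1$, replace the estimated class priors in the plug-in posterior. A level-$\alpha$ NP (Neyman–Pearson) classifier is a data-dependent classifier whose population type I error satisfies $R_0\le\alpha$ with high probability (i.e., with probability at least $1-\delta$ for a prespecified violation rate $\delta$), here obtained by thresholding the score $\hat\eta$ at a data-selected threshold $t_{\mathrm{NP}}$ (an order statistic of scores on a left-out class-0 sample). *)

theory Defs
  imports "HOL-Analysis.Analysis"
begin

definition eta_hat :: "('x \<Rightarrow> real) \<Rightarrow> ('x \<Rightarrow> real) \<Rightarrow> real \<Rightarrow> 'x \<Rightarrow> real" where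
  "eta_hat f0 f1 pi0 x = f1 x * (1 - pi0) / (f0 x * pi0 + f1 x * (1 - pi0))"

definition cost0 :: "real \<Rightarrow> real \<Rightarrow> real" where
  "cost0 t pi0 = t * pi0 / ((1 - t) * (1 - pi0) + t * pi0)"

definition eta_tilde :: "('x \<Rightarrow> real) \<Rightarrow> ('x \<Rightarrow> real) \<Rightarrow> real \<Rightarrow> real \<Rightarrow> 'x \<Rightarrow> real" where
  "eta_tilde f0 f1 t pi0 x =
     (let c0 = cost0 t pi0; c1 = 1 - c0 in f1 x * c1 / (f0 x * c0 + f1 x * c1))"

definition phi_NP :: "('x \<Rightarrow> real) \<Rightarrow> ('x \<Rightarrow> real) \<Rightarrow> real \<Rightarrow> real \<Rightarrow> 'x \<Rightarrow> nat" where
  "phi_NP f0 f1 pi0 t x = of_bool (eta_hat f0 f1 pi0 x > t)"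

definition phi_CS_r :: "('x \<Rightarrow> real) \<Rightarrow> ('x \<Rightarrow> real) \<Rightarrow> real \<Rightarrow> real \<Rightarrow> 'x \<Rightarrow> nat" where
  "phi_CS_r f0 f1 pi0 t x = of_bool (eta_tilde f0 f1 t pi0 x > 1/2)"

end

theory Submission
  imports Defs
begin

lemma key:
  fixes a b p t :: real
  assumes a: "a \<ge> 0" and b: "b \<ge> 0" and p: "0 < p" "p < 1" and t: "0 \<le> t" "t \<le> 1"
  shows "(b * (1 - t * p / ((1 - t) * (1 - p) + t * p)) /
            (a * (t * p / ((1 - t) * (1 - p) + t * p)) + b * (1 - t * p / ((1 - t) * (1 - p) + t * p))) > 1/2)
       = (b * (1 - p) / (a * p + b * (1 - p)) > t)"
proof -
  define D where "D = (1 - t) * (1 - p) + t * p"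
  have D: "D > 0"
  proof (cases "t = 0")
    case True thus ?thesis using p by (simp add: D_def)
  next
    case False
    hence "t * p > 0" using t p by simp
    moreover have "(1 - t) * (1 - p) \<ge> 0" using t p by simp
    ultimately show ?thesis unfolding D_def by linarith
  qed
  have c1: "1 - t * p / D = (1 - t) * (1 - p) / D" using D by (simp add: field_simps D_def)
  have L: "(b * ((1 - t) * (1 - p) / D) / (a * (t * p / D) + b * ((1 - t) * (1 - p) / D)) > 1/2)
        = (b * ((1 - t) * (1 - p)) > a * (t * p))"
  proof -
    have e: "b * ((1 - t) * (1 - p) / D) / (a * (t * p / D) + b * ((1 - t) * (1 - p) / D))
        = b * ((1 - t) * (1 - p)) / (a * (t * p) + b * ((1 - t) * (1 - p)))"
    proof -
      have "b * ((1 - t) * (1 - p) / D) = (b * ((1 - t) * (1 - p))) / D" by simp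
      moreover have "a * (t * p / D) + b * ((1 - t) * (1 - p) / D) = (a * (t * p) + b * ((1 - t) * (1 - p))) / D"
        by (simp add: add_divide_distrib)
      ultimately show ?thesis using D by simp
    qed
    have n1: "a * (t * p) \<ge> 0" "b * ((1 - t) * (1 - p)) \<ge> 0" using a b t p by auto
    show ?thesis
    proof (cases "a * (t * p) + b * ((1 - t) * (1 - p)) = 0")
      case True thus ?thesis using e n1 by auto
    next
      case False
      hence pos: "a * (t * p) + b * ((1 - t) * (1 - p)) > 0" using n1 by linarith
      show ?thesis unfolding e using pos by (simp add: field_simps)
    qed
  qed
  have R: "(b * (1 - p) / (a * p + b * (1 - p)) > t) = (b * ((1 - t) * (1 - p)) > a * (t * p))"
  proof -
    have n1: "a * p \<ge> 0" "b * (1 - p) \<ge> 0" using a b p by auto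
    show ?thesis
    proof (cases "a * p + b * (1 - p) = 0")
      case True
      hence "b * (1-p) = 0" "a * p = 0" using n1 by linarith+
      hence "b = 0" "a = 0" using p by auto
      thus ?thesis using True t by simp
    next
      case False
      hence pos: "a * p + b * (1 - p) > 0" using n1 by linarith
      show ?thesis using pos by (simp add: field_simps)
    qed
  qed
  show ?thesis unfolding D_def[symmetric] c1 using L R by simp
qed

theorem proposition2:
  fixes \<X> :: "(real ^ 'd) set"
    and f0 f1 :: "real ^ 'd \<Rightarrow> real"
    and pi0 t :: real
  assumes f0_nonneg: "\<And>x. x \<in> \<X> \<Longrightarrow> f0 x \<ge> 0"
    and f1_nonneg: "\<And>x. x \<in> \<X> \<Longrightarrow> f1 x \<ge> 0"
    and pi0: "0 < pi0" "pi0 < 1"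
    and t: "0 \<le> t" "t \<le> 1"
  shows "\<forall>x \<in> \<X>. phi_CS_r f0 f1 pi0 t x = phi_NP f0 f1 pi0 t x"
proof
  fix x assume x: "x \<in> \<X>"
  show "phi_CS_r f0 f1 pi0 t x = phi_NP f0 f1 pi0 t x"
    unfolding phi_CS_r_def phi_NP_def eta_tilde_def eta_hat_def cost0_def Let_def
    using key[OF f0_nonneg[OF x] f1_nonneg[OF x] pi0 t] by simp
qed

end
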